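(* Let $0\le\lambda<\gamma\le\delta$. If $\mathfrak{f}_1,\mathfrak{f}_2\in\mathcal{R}_H^0(\gamma,\delta,\lambda)$, then $\mathfrak{f}_1\ast\mathfrak{f}_2\in\mathcal{R}_H^0(\gamma,\delta,\lambda)$.
   Context: Let $\mathcal{U}=\{z\in\mathbb{C}:|z|<1\}$. $\mathcal{H}^0$ denotes the class of complex-valued harmonic functions $\mathfrak{f}=\mathfrak{s}+\overline{\mathfrak{t}}$ on $\mathcal{U}$, where $\mathfrak{s}(z)=z+\sum_{m\ge2}a_mz^m$ and $\mathfrak{t}(z)=\sum_{m\ge2}b_mz^m$ are analytic in $\mathcal{U}$. For real $0\le\lambda<\gamma\le\delta$, $\mathcal{R}_H^0(\gamma,\delta,\lambda)$ is the class of $\mathfrak{f}=\mathfrak{s}+\overline{\mathfrak{t}}\in\mathcal{H}^0$ such that for all $z\in\mathcal{U}$, $\mathrm{Re}\left[\gamma\mathfrak{s}'(z)+\delta z\mathfrak{s}''(z)+\frac{\delta-\gamma}{2}z^2\mathfrak{s}'''(z)-\lambda\right]>\left|\gamma\mathfrak{t}'(z)+\delta z\mathfrak{t}''(z)+\frac{\delta-\gamma}{2}z^2\mathfrak{t}'''(z)\right|$. For analytic $g(z)=\sum c_mz^m$, $h(z)=\sum d_mz^m$, the convolution is $(g\ast h)(z)=\sum c_md_mz^m$; for $\mathfrak{f}_i=\mathfrak{s}_i+\overline{\mathfrak{t}_i}$, $i=1,2$, the convolution is $\mathfrak{f}_1\ast\mathfrak{f}_2=\mathfrak{s}_1\ast\mathfrak{s}_2+\overline{\mathfrak{t}_1\ast\mathfrak{t}_2}$.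 *)

theory Defs
  imports "HOL-Complex_Analysis.Complex_Analysis"
begin

text \<open>A harmonic function f = s + conj t on the unit disc is represented by the
pair (s, t) of its analytic parts.\<close>

type_synonym harm = "(complex \<Rightarrow> complex) \<times> (complex \<Rightarrow> complex)"

definition H0 :: "harm set" where
  "H0 = {(s, t). s holomorphic_on ball 0 1 \<and> t holomorphic_on ball 0 1 \<and>
                 s 0 = 0 \<and> deriv s 0 = 1 \<and> t 0 = 0 \<and> deriv t 0 = 0}"

definition Lop :: "real \<Rightarrow> real \<Rightarrow> (complex \<Rightarrow> complex) \<Rightarrow> complex \<Rightarrow> complex" where
  "Lop \<gamma> \<delta> g z = of_real \<gamma> * deriv g z + of_real \<delta> * z * (deriv ^^ 2) g z
      + of_real ((\<delta> - \<gamma>) / 2) * z ^ 2 * (deriv ^^ 3) g z"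

definition RH0 :: "real \<Rightarrow> real \<Rightarrow> real \<Rightarrow> harm set" where
  "RH0 \<gamma> \<delta> lam = {(s, t) \<in> H0. \<forall>z \<in> ball 0 1.
      Re (Lop \<gamma> \<delta> s z - of_real lam) > cmod (Lop \<gamma> \<delta> t z)}"

definition tcoef :: "(complex \<Rightarrow> complex) \<Rightarrow> nat \<Rightarrow> complex" where
  "tcoef g n = (deriv ^^ n) g 0 / of_nat (fact n)"

definition aconv :: "(complex \<Rightarrow> complex) \<Rightarrow> (complex \<Rightarrow> complex) \<Rightarrow> complex \<Rightarrow> complex" where
  "aconv g h z = (\<Sum>n. tcoef g n * tcoef h n * z ^ n)"

definition hconv :: "harm \<Rightarrow> harm \<Rightarrow> harm" where
  "hconv f1 f2 = (aconv (fst f1) (fst f2), aconv (snd f1) (snd f2))"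

end

theory Submission
  imports Defs
begin
definition good :: "(nat \<Rightarrow> complex) \<Rightarrow> bool" where
  "good c \<longleftrightarrow> (\<forall>z::complex. norm z < 1 \<longrightarrow> summable (\<lambda>n. c n * z ^ n))"

definition ps :: "(nat \<Rightarrow> complex) \<Rightarrow> complex \<Rightarrow> complex" where
  "ps c z = (\<Sum>n. c n * z ^ n)"

lemma good_radius:
  assumes "good c" shows "fps_conv_radius (Abs_fps c) \<ge> 1"
  unfolding fps_conv_radius_def
proof (rule conv_radius_geI_ex')
  fix r :: real assume "0 < r" "ereal r < 1"
  then show "summable (\<lambda>n. fps_nth (Abs_fps c) n * of_real r ^ n)"
    using assms unfolding good_def by auto
qed

lemma ps_eval: "ps c = eval_fps (Abs_fps c)"
  by (auto simp: ps_def eval_fps_def fun_eq_iff)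

lemma ball_sub_eball: "fps_conv_radius F \<ge> 1 \<Longrightarrow> ball (0::complex) 1 \<subseteq> eball 0 (fps_conv_radius F)"
proof
  fix x :: complex assume F: "fps_conv_radius F \<ge> 1" and "x \<in> ball 0 1"
  then have "ereal (norm x) < 1" by simp
  then have "ereal (norm x) < fps_conv_radius F" using F by (rule less_le_trans)
  then show "x \<in> eball 0 (fps_conv_radius F)" by (simp add: eball_def)
qed

lemma good_holo: "good c \<Longrightarrow> ps c holomorphic_on ball 0 1"
  unfolding ps_eval by (intro holomorphic_on_eval_fps ball_sub_eball good_radius)

lemma good_cont: "good c \<Longrightarrow> continuous_on (ball 0 1) (ps c)"
  using good_holo holomorphic_on_imp_continuous_on by blast

lemma good_tcoef:
  assumes "good c" shows "tcoef (ps c) n = c n"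
proof -
  have r: "fps_conv_radius (Abs_fps c) > 0"
  proof -
    have "(0::ereal) < 1" by simp
    then show ?thesis using good_radius[OF assms] by (rule less_le_trans)
  qed
  have "fps_nth (Abs_fps c) n = (deriv ^^ n) (eval_fps (Abs_fps c)) 0 / fact n"
    by (rule fps_nth_fps_expansion[OF eval_fps_has_fps_expansion[OF r]])
  then show ?thesis by (simp add: tcoef_def ps_eval)
qed

lemma good_sums: "good c \<Longrightarrow> norm z < 1 \<Longrightarrow> (\<lambda>n. c n * z ^ n) sums ps c z"
  unfolding good_def ps_def by (auto intro: summable_sums)

lemma good_abs: "good c \<Longrightarrow> norm z < 1 \<Longrightarrow> summable (\<lambda>n. norm (c n * z ^ n))"
proof -
  assume "good c" "norm z < 1"
  then have "ereal (norm z) < fps_conv_radius (Abs_fps c)"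
  proof -
    have "ereal (norm z) < 1" using \<open>norm z < 1\<close> by simp
    then show ?thesis using good_radius[OF \<open>good c\<close>] by (rule less_le_trans)
  qed
  then show ?thesis using norm_summable_fps[of z "Abs_fps c"] by simp
qed

lemma holo_good:
  assumes "g holomorphic_on ball 0 1"
  shows "good (tcoef g)" and "\<And>z. norm z < 1 \<Longrightarrow> ps (tcoef g) z = g z"
proof -
  have s: "(\<lambda>n. tcoef g n * z ^ n) sums g z" if "norm z < 1" for z
    using holomorphic_power_series[OF assms, of z] that by (simp add: tcoef_def)
  show "good (tcoef g)" unfolding good_def using s sums_summable by blast
  show "ps (tcoef g) z = g z" if "norm z < 1" for z
    using s[OF that] unfolding ps_def by (simp add: sums_iff)
qed

lemma good_bounded:
  assumes "\<And>n. norm (c n) \<le> B" shows "good c"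
  unfolding good_def
proof (intro allI impI)
  fix z :: complex assume z: "norm z < 1"
  have "summable (\<lambda>n. B * norm z ^ n)" using z by (intro summable_mult summable_geometric) auto
  then show "summable (\<lambda>n. c n * z ^ n)"
    by (rule summable_comparison_test[rotated]) (auto simp: norm_mult norm_power intro!: mult_right_mono assms)
qed

lemma summable_bounded_pow:
  fixes c :: "nat \<Rightarrow> complex"
  assumes "summable (\<lambda>n. c n * of_real r ^ n)" "r \<ge> 0"
  obtains B where "B > 0" "\<And>n. norm (c n) * r ^ n \<le> B"
proof -
  have "(\<lambda>n. c n * of_real r ^ n) \<longlonglongrightarrow> 0" using assms(1) by (rule summable_LIMSEQ_zero)
  then have "Bseq (\<lambda>n. c n * of_real r ^ n)" by (intro convergent_imp_Bseq convergentI)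
  then obtain B where "B > 0" "\<And>n. norm (c n * of_real r ^ n) \<le> B" by (auto elim: BseqE)
  then show ?thesis using that assms(2) by (auto simp: norm_mult norm_power)
qed

lemma good_mult:
  assumes p: "good p" and q: "good q" shows "good (\<lambda>n. p n * q n)"
  unfolding good_def
proof (intro allI impI)
  fix z :: complex assume z: "norm z < 1"
  define r where "r = (1 + norm z) / 2"
  define \<rho> where "\<rho> = sqrt r"
  have nz: "norm z \<ge> 0" by simp
  have r1: "norm z < r" using z unfolding r_def by (simp add: field_simps)
  have r2: "r < 1" using z unfolding r_def by (simp add: field_simps)
  have r3: "0 < r" unfolding r_def by (simp add: add_pos_nonneg)
  note r = r1 r2 r3
  have \<rho>: "0 < \<rho>" "\<rho> < 1" "\<rho>^2 = r" using r by (auto simp: \<rho>_def)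
  have n\<rho>: "norm (of_real \<rho> :: complex) < 1" using \<rho> by simp
  have sp: "summable (\<lambda>n. p n * of_real \<rho> ^ n)" using p n\<rho> unfolding good_def by blast
  have sq: "summable (\<lambda>n. q n * of_real \<rho> ^ n)" using q n\<rho> unfolding good_def by blast
  obtain B1 where B1: "B1 > 0" "\<And>n. norm (p n) * \<rho> ^ n \<le> B1"
    using summable_bounded_pow[OF sp] \<rho> by auto
  obtain B2 where B2: "B2 > 0" "\<And>n. norm (q n) * \<rho> ^ n \<le> B2"
    using summable_bounded_pow[OF sq] \<rho> by auto
  have g: "summable (\<lambda>n. (B1 * B2) * (norm z / r) ^ n)"
    using r by (intro summable_mult summable_geometric) auto
  show "summable (\<lambda>n. p n * q n * z ^ n)"
  proof (rule summable_comparison_test[OF _ g], intro exI allI impI)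
    fix n :: nat
    have "norm (p n * q n * z ^ n) = (norm (p n) * \<rho> ^ n) * (norm (q n) * \<rho> ^ n) * (norm z / r) ^ n"
      using \<rho> by (simp add: norm_mult norm_power power_divide power_mult_distrib flip: power_mult \<rho>(3))
         (simp add: power_mult power_mult_distrib mult_ac field_simps power2_eq_square)
    also have "\<dots> \<le> B1 * B2 * (norm z / r) ^ n"
      using B1 B2 r \<rho> by (intro mult_right_mono mult_mono) auto
    finally show "norm (p n * q n * z ^ n) \<le> B1 * B2 * (norm z / r) ^ n" .
  qed
qed

lemma ps_affine:
  assumes "good c" "norm z < 1"
  shows "ps (\<lambda>n. x * c n + (if n = 0 then y else 0)) z = x * ps c z + y"
proof -
  have "(\<lambda>n. x * (c n * z ^ n)) sums (x * ps c z)" using good_sums[OF assms] by (rule sums_mult)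
  moreover have "(\<lambda>n. if n = 0 then y else 0) sums y" by (rule sums_single[of 0 "\<lambda>_. y", simplified])
  ultimately have "(\<lambda>n. x * (c n * z ^ n) + (if n = 0 then y else 0)) sums (x * ps c z + y)"
    by (rule sums_add)
  moreover have "(\<lambda>n. (x * c n + (if n = 0 then y else 0)) * z ^ n) = (\<lambda>n. x * (c n * z ^ n) + (if n = 0 then y else 0))"
    by (auto simp: fun_eq_iff algebra_simps)
  ultimately show ?thesis unfolding ps_def by (simp add: sums_iff)
qed

lemma good_affine:
  assumes "good c" shows "good (\<lambda>n. x * c n + (if n = 0 then y else 0))"
  unfolding good_def
proof (intro allI impI)
  fix z :: complex assume z: "norm z < 1"
  have "(\<lambda>n. x * (c n * z ^ n)) sums (x * ps c z)" using good_sums[OF assms z] by (rule sums_mult)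
  moreover have "(\<lambda>n. if n = 0 then y else 0) sums y" by (rule sums_single[of 0 "\<lambda>_. y", simplified])
  ultimately have "(\<lambda>n. x * (c n * z ^ n) + (if n = 0 then y else 0)) sums (x * ps c z + y)"
    by (rule sums_add)
  moreover have "(\<lambda>n. (x * c n + (if n = 0 then y else 0)) * z ^ n) = (\<lambda>n. x * (c n * z ^ n) + (if n = 0 then y else 0))"
    by (auto simp: fun_eq_iff algebra_simps)
  ultimately show "summable (\<lambda>n. (x * c n + (if n = 0 then y else 0)) * z ^ n)" by (simp add: sums_iff)
qed

lemma ps_add:
  assumes "good c" "good d" "norm z < 1"
  shows "ps (\<lambda>n. c n + d n) z = ps c z + ps d z" and "good (\<lambda>n. c n + d n)"
proof -
  have "(\<lambda>n. c n * z ^ n + d n * z ^ n) sums (ps c z + ps d z)" if "norm z < 1" for z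
    using good_sums[OF assms(1) that] good_sums[OF assms(2) that] by (rule sums_add)
  then have s: "(\<lambda>n. (c n + d n) * z ^ n) sums (ps c z + ps d z)" if "norm z < 1" for z
    using that by (simp add: algebra_simps)
  show "ps (\<lambda>n. c n + d n) z = ps c z + ps d z" using s[OF assms(3)] by (simp add: ps_def sums_iff)
  show "good (\<lambda>n. c n + d n)" unfolding good_def using s sums_summable by blast
qed

lemma ps_cmult:
  assumes "good c" "norm z < 1"
  shows "ps (\<lambda>n. x * c n) z = x * ps c z" and "good (\<lambda>n. x * c n)"
  using ps_affine[OF assms, of x 0] good_affine[OF assms(1), of x 0] by simp_all

lemma INT:
  fixes g :: "real \<Rightarrow> complex" and \<phi> :: "nat \<Rightarrow> real \<Rightarrow> complex" and c :: "nat \<Rightarrow> complex"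
  assumes g: "continuous_on {a..b} g" and \<phi>c: "\<And>n. continuous_on {a..b} (\<phi> n)"
    and \<phi>b: "\<And>n t. t \<in> {a..b} \<Longrightarrow> norm (\<phi> n t) \<le> 1" and s: "summable (\<lambda>n. norm (c n))"
  shows "(\<lambda>n. c n * integral {a..b} (\<lambda>t. g t * \<phi> n t)) sums integral {a..b} (\<lambda>t. g t * (\<Sum>n. c n * \<phi> n t))"
    and "(\<lambda>t. g t * (\<Sum>n. c n * \<phi> n t)) integrable_on {a..b}"
proof -
  have "compact (g ` {a..b})" by (intro compact_continuous_image g) auto
  then have "bounded (g ` {a..b})" by (rule compact_imp_bounded)
  then obtain B where "\<forall>x\<in>g ` {a..b}. norm x \<le> B" unfolding bounded_iff by blast
  then have B: "\<And>t. t \<in> {a..b} \<Longrightarrow> norm (g t) \<le> B" by blast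
  define f where "f = (\<lambda>i t. g t * (c i * \<phi> i t))"
  have fb: "norm (f i t) \<le> B * norm (c i)" if "t \<in> {a..b}" for i t
  proof -
    have "norm (f i t) = norm (g t) * (norm (c i) * norm (\<phi> i t))" by (simp add: f_def norm_mult)
    also have "\<dots> \<le> B * (norm (c i) * 1)"
      using B[OF that] \<phi>b[OF that, of i] order_trans[OF norm_ge_zero B[OF that]]
      by (intro mult_mono mult_left_mono) auto
    finally show ?thesis by simp
  qed
  have u: "uniform_limit {a..b} (\<lambda>n t. \<Sum>i<n. f i t) (\<lambda>t. \<Sum>i. f i t) sequentially"
    by (rule Weierstrass_m_test[OF fb]) (auto intro: summable_mult s)
  have sum_eq: "(\<Sum>i. f i t) = g t * (\<Sum>n. c n * \<phi> n t)" if "t \<in> {a..b}" for t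
  proof -
    have "summable (\<lambda>n. norm (c n * \<phi> n t))"
      by (rule summable_comparison_test[OF _ s]) (auto simp: norm_mult intro!: mult_left_le \<phi>b that)
    then have "summable (\<lambda>n. c n * \<phi> n t)" by (rule summable_norm_cancel)
    then show ?thesis unfolding f_def by (rule suminf_mult)
  qed
  have cf: "continuous_on {a..b} (\<lambda>t. \<Sum>i<n. f i t)" for n
    unfolding f_def by (intro continuous_intros g \<phi>c)
  obtain I J where I: "\<And>n. ((\<lambda>t. \<Sum>i<n. f i t) has_integral I n) {a..b}"
     and J: "((\<lambda>t. \<Sum>i. f i t) has_integral J) {a..b}" and lim: "I \<longlonglongrightarrow> J"
    by (rule uniform_limit_integral[OF u cf]) auto
  have int_i: "((f i) has_integral (c i * integral {a..b} (\<lambda>t. g t * \<phi> i t))) {a..b}" for i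
  proof -
    have "(\<lambda>t. g t * \<phi> i t) integrable_on {a..b}" by (intro integrable_continuous_interval continuous_intros g \<phi>c)
    then have "((\<lambda>t. c i * (g t * \<phi> i t)) has_integral (c i * integral {a..b} (\<lambda>t. g t * \<phi> i t))) {a..b}"
      by (intro has_integral_mult_right integrable_integral)
    then show ?thesis by (simp add: f_def mult_ac)
  qed
  have "I n = (\<Sum>i<n. c i * integral {a..b} (\<lambda>t. g t * \<phi> i t))" for n
    by (rule has_integral_unique[OF I has_integral_sum]) (auto intro: int_i)
  then have "I = (\<lambda>n. \<Sum>i<n. c i * integral {a..b} (\<lambda>t. g t * \<phi> i t))" by (rule ext)
  with lim have "(\<lambda>n. c n * integral {a..b} (\<lambda>t. g t * \<phi> n t)) sums J" by (simp add: sums_def)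
  moreover have J': "((\<lambda>t. g t * (\<Sum>n. c n * \<phi> n t)) has_integral J) {a..b}"
    using J by (rule has_integral_eq[rotated]) (simp add: sum_eq)
  ultimately show "(\<lambda>n. c n * integral {a..b} (\<lambda>t. g t * \<phi> n t)) sums integral {a..b} (\<lambda>t. g t * (\<Sum>n. c n * \<phi> n t))"
    by (simp add: integral_unique)
  show "(\<lambda>t. g t * (\<Sum>n. c n * \<phi> n t)) integrable_on {a..b}" using J' by blast
qed

lemma orth_int:
  fixes j :: int
  shows "integral {0..2*pi} (\<lambda>t. cis (of_int j * t)) = (if j = 0 then 2*pi else 0)"
proof (cases "j = 0")
  case True then show ?thesis by (simp add: scaleR_conv_of_real)
next
  case False
  define F where "F = (\<lambda>t. cis (of_int j * t) / (\<i> * of_int j))"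
  have d: "(F has_vector_derivative cis (of_int j * t)) (at t within {0..2*pi})" for t
  proof -
    have "((\<lambda>t. cis (of_int j * t)) has_derivative (\<lambda>h. (of_int j * h) *\<^sub>R (\<i> * cis (of_int j * t)))) (at t within {0..2*pi})"
      by (intro has_derivative_cis derivative_intros)
    then have "((\<lambda>t. cis (of_int j * t)) has_vector_derivative (of_int j *\<^sub>R (\<i> * cis (of_int j * t)))) (at t within {0..2*pi})"
      by (simp add: has_vector_derivative_def scaleR_scaleR mult.commute)
    then have "((\<lambda>t. cis (of_int j * t) / (\<i> * of_int j)) has_vector_derivative (of_int j *\<^sub>R (\<i> * cis (of_int j * t))) / (\<i> * of_int j)) (at t within {0..2*pi})"
      by (rule has_vector_derivative_divide)
    moreover have "(of_int j *\<^sub>R (\<i> * cis (of_int j * t))) / (\<i> * of_int j) = cis (of_int j * t)"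
      using False by (simp add: scaleR_conv_of_real field_simps)
    ultimately show ?thesis by (simp add: F_def)
  qed
  have "((\<lambda>t. cis (of_int j * t)) has_integral (F (2*pi) - F 0)) {0..2*pi}"
    by (rule fundamental_theorem_of_calculus) (auto intro: d)
  moreover have "F (2*pi) = F 0"
  proof -
    have "cis (of_int j * (2*pi)) = cis (2 * pi * of_int j)" by (simp add: mult_ac)
    also have "\<dots> = 1" by (rule cis_multiple_2pi) simp
    finally show ?thesis by (simp add: F_def)
  qed
  ultimately show ?thesis using False by (simp add: integral_unique)
qed

lemma orth_pos:
  fixes n k :: nat
  shows "integral {0..2*pi} (\<lambda>t. cis (-(of_nat k * t)) * cis (of_nat n * t)) = (if n = k then 2*pi else 0)"
proof -
  have "(\<lambda>t. cis (-(of_nat k * t)) * cis (of_nat n * t)) = (\<lambda>t. cis (of_int (int n - int k) * t))"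
    by (auto simp: cis_mult fun_eq_iff algebra_simps)
  then show ?thesis using orth_int[of "int n - int k"] by simp
qed

lemma orth_neg:
  fixes n k :: nat
  shows "integral {0..2*pi} (\<lambda>t. cis (-(of_nat k * t)) * cis (-(of_nat n * t))) = (if n = 0 \<and> k = 0 then 2*pi else 0)"
proof -
  have e: "cis (-(of_nat k * t)) * cis (-(of_nat n * t)) = cis (of_int (- int n - int k) * t)" for t :: real
    unfolding cis_mult by (rule arg_cong[where f=cis]) (simp add: algebra_simps)
  have "(\<lambda>t. cis (-(of_nat k * t)) * cis (-(of_nat n * t))) = (\<lambda>t. cis (of_int (- int n - int k) * t))"
    by (simp only: e)
  then show ?thesis using orth_int[of "- int n - int k"] by simp
qed

lemma cont_ps_comp:
  assumes "good c" "continuous_on S h" "\<And>t. t \<in> S \<Longrightarrow> norm (h t) < 1"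
  shows "continuous_on S (\<lambda>t. ps c (h t))"
  by (rule continuous_on_compose2[OF good_cont[OF assms(1)] assms(2)]) (use assms(3) in auto)

lemma ps_circle:
  assumes "good c" "norm w < 1"
  shows "ps c (w * cis (s * t)) = (\<Sum>n. (c n * w ^ n) * cis (of_nat n * (s * t)))"
proof -
  have "(w * cis (s * t)) ^ n = w ^ n * cis (of_nat n * (s * t))" for n
    by (simp only: power_mult_distrib Complex.DeMoivre)
  then show ?thesis unfolding ps_def by (simp add: mult_ac)
qed

lemma good_abs': "good c \<Longrightarrow> norm w < 1 \<Longrightarrow> summable (\<lambda>n. norm (c n * w ^ n))"
  by (rule good_abs)

lemma sums_single_at0: "(\<lambda>n. (c :: nat \<Rightarrow> complex) n * (if n = 0 then y else 0)) sums (c 0 * y)"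
proof -
  have "(\<lambda>n. if n = 0 then c n * y else 0) sums (c 0 * y)" by (rule sums_single[of 0 "\<lambda>n. c n * y", simplified])
  moreover have "(\<lambda>n. c n * (if n = 0 then y else 0)) = (\<lambda>n. if n = 0 then c n * y else 0)" by (auto simp: fun_eq_iff)
  ultimately show ?thesis by simp
qed

lemma of_real_if_c: "complex_of_real (if P then a else 0) = (if P then of_real a else 0)" by simp

lemma lemH:
  assumes f: "good f" and m: "good m" and f0: "f 0 = 1" and m0: "m 0 = 1"
    and fpos: "\<And>w. norm w < 1 \<Longrightarrow> Re (ps f w) \<ge> 0"
    and mge: "\<And>w. norm w < 1 \<Longrightarrow> Re (ps m w) \<ge> \<alpha>"
    and z: "norm z < 1"
  shows "Re (ps (\<lambda>n. f n * m n) z) \<ge> 2 * \<alpha> - 1"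
proof -
  define \<sigma> where "\<sigma> = (1 + norm z) / 2"
  have nz: "norm z \<ge> 0" by simp
  have \<sigma>1: "\<sigma> < 1" "norm z < \<sigma>" using z unfolding \<sigma>_def by (simp_all add: field_simps)
  have \<sigma>0: "0 < \<sigma>" unfolding \<sigma>_def by (simp add: add_pos_nonneg)
  define w where "w = z / of_real \<sigma>"
  have w: "norm w < 1" using \<sigma>0 \<sigma>1 by (simp add: w_def norm_divide field_simps)
  have zw: "z = of_real \<sigma> * w" using \<sigma>0 by (simp add: w_def)
  have n\<sigma>: "norm (complex_of_real \<sigma>) < 1" using \<sigma>0 \<sigma>1 by simp
  define S where "S = {0..2*pi}"
  define Mt where "Mt = (\<lambda>t. ps m (of_real \<sigma> * cis t))"
  define Ft where "Ft = (\<lambda>t. ps f (w * cis (- t)))"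
  have cMt: "continuous_on S Mt" unfolding Mt_def
    by (rule cont_ps_comp[OF m]) (use \<sigma>0 \<sigma>1 in \<open>auto intro!: continuous_intros simp: norm_mult\<close>)
  have cFt: "continuous_on S Ft" unfolding Ft_def
    by (rule cont_ps_comp[OF f]) (use w in \<open>auto intro!: continuous_intros simp: norm_mult\<close>)
  define W2 where "W2 = (\<lambda>t. Mt t + cnj (Mt t))"
  have W2re: "W2 t = of_real (2 * Re (Mt t))" for t by (simp add: W2_def complex_add_cnj)
  have cW2: "continuous_on S W2" unfolding W2_def by (intro continuous_intros cMt)
  define cm where "cm = (\<lambda>n. m n * of_real \<sigma> ^ n)"
  define cm' where "cm' = (\<lambda>n. cnj (m n) * of_real \<sigma> ^ n)"
  define cf where "cf = (\<lambda>n. f n * w ^ n)"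
  have scm: "summable (\<lambda>n. norm (cm n))" unfolding cm_def by (rule good_abs[OF m n\<sigma>])
  have scm': "summable (\<lambda>n. norm (cm' n))" using scm by (simp add: cm_def cm'_def norm_mult)
  have scf: "summable (\<lambda>n. norm (cf n))" unfolding cf_def by (rule good_abs[OF f w])
  have sM: "Mt t = (\<Sum>n. cm n * cis (of_nat n * t))" for t
    using ps_circle[OF m n\<sigma>, of 1 t] by (simp add: Mt_def cm_def)
  have sM': "cnj (Mt t) = (\<Sum>n. cm' n * cis (- (of_nat n * t)))" for t
  proof -
    have "(\<lambda>n. cm n * cis (of_nat n * t)) sums Mt t"
      unfolding sM by (rule summable_sums, rule summable_norm_cancel)
        (use scm in \<open>simp add: norm_mult\<close>)
    then have "(\<lambda>n. cnj (cm n * cis (of_nat n * t))) sums cnj (Mt t)" by (simp only: sums_cnj)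
    then show ?thesis by (simp add: sums_iff cm_def cm'_def cis_cnj)
  qed
  have sF: "Ft t = (\<Sum>n. cf n * cis (- (of_nat n * t)))" for t
    using ps_circle[OF f w, of "-1" t] by (simp add: Ft_def cf_def)
  have contcis: "continuous_on S (\<lambda>t. cis (of_nat n * t))" "continuous_on S (\<lambda>t. cis (- (of_nat n * t)))" for n
    by (intro continuous_intros)+
  have step1: "integral S (\<lambda>t. W2 t * cis (- (of_nat k * t))) = 2 * pi * (m k * of_real \<sigma> ^ k) + (if k = 0 then 2 * pi else 0)" for k
  proof -
    have i1: "integral S (\<lambda>t. cis (- (of_nat k * t)) * Mt t) = cm k * (2 * pi)"
    proof -
      have "(\<lambda>n. cm n * integral S (\<lambda>t. cis (- (of_nat k * t)) * cis (of_nat n * t))) sums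
            integral S (\<lambda>t. cis (- (of_nat k * t)) * (\<Sum>n. cm n * cis (of_nat n * t)))"
        unfolding S_def by (rule INT(1)) (use scm in \<open>auto intro!: continuous_intros\<close>)
      moreover have "(\<lambda>n. cm n * integral S (\<lambda>t. cis (- (of_nat k * t)) * cis (of_nat n * t))) sums (cm k * (2 * pi))"
        unfolding S_def orth_pos using sums_single[of k "\<lambda>n. cm n * (2 * pi)"]
        by (simp add: if_distrib cong: if_cong)
      ultimately show ?thesis unfolding sM[symmetric] by (simp add: sums_iff)
    qed
    have i2: "integral S (\<lambda>t. cis (- (of_nat k * t)) * cnj (Mt t)) = (if k = 0 then 2 * pi else 0)"
    proof -
      have "(\<lambda>n. cm' n * integral S (\<lambda>t. cis (- (of_nat k * t)) * cis (- (of_nat n * t)))) sums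
            integral S (\<lambda>t. cis (- (of_nat k * t)) * (\<Sum>n. cm' n * cis (- (of_nat n * t))))"
        unfolding S_def by (rule INT(1)) (use scm' in \<open>auto intro!: continuous_intros\<close>)
      moreover have "(\<lambda>n. cm' n * integral S (\<lambda>t. cis (- (of_nat k * t)) * cis (- (of_nat n * t)))) sums
           (if k = 0 then 2 * pi else 0)"
      proof (cases "k = 0")
        case True
        then show ?thesis unfolding S_def orth_neg using sums_single_at0[of cm' "2 * pi"]
          by (simp add: cm'_def m0 of_real_if_c)
      next
        case False
        then show ?thesis unfolding S_def orth_neg by simp
      qed
      ultimately show ?thesis unfolding sM'[symmetric] by (simp add: sums_iff)
    qed
    have "integral S (\<lambda>t. W2 t * cis (- (of_nat k * t))) =
          integral S (\<lambda>t. cis (- (of_nat k * t)) * Mt t + cis (- (of_nat k * t)) * cnj (Mt t))"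
      by (simp add: W2_def algebra_simps)
    also have "\<dots> = integral S (\<lambda>t. cis (- (of_nat k * t)) * Mt t) + integral S (\<lambda>t. cis (- (of_nat k * t)) * cnj (Mt t))"
      unfolding S_def
      by (rule integral_add; rule integrable_continuous_interval) (use cMt in \<open>auto intro!: continuous_intros simp: S_def\<close>)
    also have "\<dots> = 2 * pi * (m k * of_real \<sigma> ^ k) + (if k = 0 then 2 * pi else 0)"
      unfolding i1 i2 by (simp add: cm_def)
    finally show ?thesis .
  qed
  have step2: "integral S (\<lambda>t. W2 t * Ft t) = 2 * pi * ps (\<lambda>n. f n * m n) z + 2 * pi"
  proof -
    have "(\<lambda>k. cf k * integral S (\<lambda>t. W2 t * cis (- (of_nat k * t)))) sums
            integral S (\<lambda>t. W2 t * (\<Sum>k. cf k * cis (- (of_nat k * t))))"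
      unfolding S_def by (rule INT(1)) (use scf cW2 in \<open>auto intro!: continuous_intros simp: S_def\<close>)
    then have A: "(\<lambda>k. cf k * integral S (\<lambda>t. W2 t * cis (- (of_nat k * t)))) sums integral S (\<lambda>t. W2 t * Ft t)"
      unfolding sF .
    have "(\<lambda>k. 2 * pi * (f k * m k * z ^ k)) sums (2 * pi * ps (\<lambda>n. f n * m n) z)"
      by (rule sums_mult, rule good_sums[OF good_mult[OF f m] z])
    then have "(\<lambda>k. 2 * pi * (f k * m k * z ^ k) + cf k * (if k = 0 then 2 * pi else 0)) sums
               (2 * pi * ps (\<lambda>n. f n * m n) z + cf 0 * (2 * pi))"
      using sums_add[OF _ sums_single_at0[of cf "2 * pi"]] by (simp add: of_real_if_c)
    moreover have "(\<lambda>k. 2 * pi * (f k * m k * z ^ k) + cf k * (if k = 0 then 2 * pi else 0)) =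
                   (\<lambda>k. cf k * integral S (\<lambda>t. W2 t * cis (- (of_nat k * t))))"
      unfolding step1 by (auto simp: fun_eq_iff cf_def zw power_mult_distrib algebra_simps)
    ultimately have B: "(\<lambda>k. cf k * integral S (\<lambda>t. W2 t * cis (- (of_nat k * t)))) sums
               (2 * pi * ps (\<lambda>n. f n * m n) z + 2 * pi)"
      by (simp add: cf_def f0)
    show ?thesis using sums_unique2[OF A B] .
  qed
  have step3: "integral S Ft = 2 * pi"
  proof -
    have "(\<lambda>k. cf k * integral S (\<lambda>t. 1 * cis (- (of_nat k * t)))) sums
            integral S (\<lambda>t. 1 * (\<Sum>k. cf k * cis (- (of_nat k * t))))"
      unfolding S_def by (rule INT(1)) (use scf in \<open>auto intro!: continuous_intros\<close>)
    then have A: "(\<lambda>k. cf k * integral S (\<lambda>t. cis (- (of_nat k * t)))) sums integral S Ft"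
      unfolding sF[symmetric] by simp
    have e: "integral S (\<lambda>t. cis (- (of_nat k * t))) = (if k = 0 then 2 * pi else 0)" for k
      using orth_int[of "- int k"] by (simp add: S_def)
    have B: "(\<lambda>k. cf k * integral S (\<lambda>t. cis (- (of_nat k * t)))) sums (2 * pi)"
      unfolding e using sums_single_at0[of cf "2 * pi"] by (simp add: cf_def f0 of_real_if_c)
    show ?thesis using sums_unique2[OF A B] .
  qed
  define Dt where "Dt = (\<lambda>t. (W2 t - of_real (2 * \<alpha>)) * Ft t)"
  have cD: "continuous_on S Dt" unfolding Dt_def by (intro continuous_intros cW2 cFt)
  have iD: "Dt integrable_on S" unfolding S_def by (rule integrable_continuous_interval) (use cD in \<open>simp add: S_def\<close>)
  have iF: "Ft integrable_on S" unfolding S_def by (rule integrable_continuous_interval) (use cFt in \<open>simp add: S_def\<close>)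
  have "integral S (\<lambda>t. W2 t * Ft t) = integral S (\<lambda>t. Dt t + of_real (2 * \<alpha>) * Ft t)"
    by (simp add: Dt_def algebra_simps)
  also have "\<dots> = integral S Dt + of_real (2 * \<alpha>) * integral S Ft"
    using iD iF by (simp add: integral_add integrable_on_mult_right)
  finally have eq: "2 * pi * ps (\<lambda>n. f n * m n) z + 2 * pi = integral S Dt + complex_of_real (2 * \<alpha>) * complex_of_real (2 * pi)"
    unfolding step2 step3 .
  have ReD: "Re (integral S Dt) = integral S (\<lambda>t. Re (Dt t))"
    using integral_linear[OF iD bounded_linear_Re] by (simp add: o_def)
  have "0 \<le> integral S (\<lambda>t. Re (Dt t))"
  proof (rule integral_nonneg)
    show "(\<lambda>t. Re (Dt t)) integrable_on S" using integrable_linear[OF iD bounded_linear_Re] by (simp add: o_def)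
  next
    fix t assume "t \<in> S"
    have a: "2 * Re (Mt t) - 2 * \<alpha> \<ge> 0" using mge[of "of_real \<sigma> * cis t"] \<sigma>0 \<sigma>1 by (simp add: Mt_def norm_mult)
    have b: "Re (Ft t) \<ge> 0" using fpos[of "w * cis (- t)"] w by (simp add: Ft_def norm_mult)
    have "Re (Dt t) = (2 * Re (Mt t) - 2 * \<alpha>) * Re (Ft t)" by (simp add: Dt_def W2re)
    then show "0 \<le> Re (Dt t)" using a b by simp
  qed
  then have "Re (integral S Dt) \<ge> 0" using ReD by simp
  then have "2 * pi * Re (ps (\<lambda>n. f n * m n) z) + 2 * pi \<ge> 2 * \<alpha> * (2 * pi)"
    using arg_cong[OF eq, of Re] by simp
  then have "2 * pi * (Re (ps (\<lambda>n. f n * m n) z) - (2 * \<alpha> - 1)) \<ge> 0" by (simp add: algebra_simps)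
  then show ?thesis using pi_gt_zero by (auto simp: zero_le_mult_iff)
qed

lemma Re_ofreal_mult: "Re (complex_of_real r * z) = r * Re z" by simp

lemma lemH2:
  assumes p: "good p" and q: "good q" and p0: "p 0 = 1" and q0: "q 0 = 1" and a: "a < 1"
    and pge: "\<And>w. norm w < 1 \<Longrightarrow> Re (ps p w) \<ge> a"
    and qge: "\<And>w. norm w < 1 \<Longrightarrow> Re (ps q w) \<ge> b"
    and z: "norm z < 1"
  shows "Re (ps (\<lambda>n. p n * q n) z) \<ge> a + (1 - a) * (2 * b - 1)"
proof -
  define f where "f = (\<lambda>n. complex_of_real (1 / (1 - a)) * p n + (if n = 0 then complex_of_real (- a / (1 - a)) else 0))"
  have gf: "good f" unfolding f_def by (rule good_affine[OF p])
  have ra: "1/(1-a) + -a/(1-a) = (1::real)" using a by (simp add: field_simps)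
  have "f 0 = complex_of_real (1/(1-a)) + complex_of_real (-a/(1-a))" by (simp only: f_def p0 mult_1_right if_True simp_thms)
  also have "\<dots> = complex_of_real (1/(1-a) + -a/(1-a))" by (rule of_real_add[symmetric])
  finally have f0: "f 0 = 1" unfolding ra by simp
  have psf: "ps f w = complex_of_real (1 / (1 - a)) * ps p w + complex_of_real (- a / (1 - a))" if "norm w < 1" for w
    unfolding f_def by (rule ps_affine[OF p that])
  have fpos: "Re (ps f w) \<ge> 0" if "norm w < 1" for w
  proof -
    have "Re (ps f w) = (1 / (1 - a)) * Re (ps p w) + (- a / (1 - a))"
      by (simp only: psf[OF that] plus_complex.sel Re_ofreal_mult Re_complex_of_real)
    also have "\<dots> = Re (ps p w) / (1 - a) - a / (1 - a)" by simp
    also have "\<dots> = (Re (ps p w) - a) / (1 - a)" by (rule diff_divide_distrib[symmetric])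
    finally have "Re (ps f w) = (Re (ps p w) - a) / (1 - a)" .
    then show ?thesis using pge[OF that] a by simp
  qed
  have H: "Re (ps (\<lambda>n. f n * q n) z) \<ge> 2 * b - 1" by (rule lemH[OF gf q f0 q0 fpos qge z])
  have eq: "(\<lambda>n. p n * q n) = (\<lambda>n. complex_of_real (1 - a) * (f n * q n) + (if n = 0 then complex_of_real a else 0))"
  proof
    fix n show "p n * q n = complex_of_real (1 - a) * (f n * q n) + (if n = 0 then complex_of_real a else 0)"
    proof (cases "n = 0")
      case True then show ?thesis using f0 by (simp add: p0 q0)
    next
      case False
      have one: "complex_of_real (1 - a) * complex_of_real (1 / (1 - a)) = 1" using a by (simp flip: of_real_mult)
      have fn: "f n = complex_of_real (1 / (1 - a)) * p n" using False by (simp add: f_def)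
      have "complex_of_real (1 - a) * (f n * q n) = (complex_of_real (1 - a) * complex_of_real (1 / (1 - a))) * (p n * q n)"
        unfolding fn by (simp only: mult.assoc)
      also have "\<dots> = p n * q n" unfolding one by (rule mult_1_left)
      finally have X: "complex_of_real (1 - a) * (f n * q n) = p n * q n" .
      have Z: "(if n = 0 then complex_of_real a else 0) = 0" using False by simp
      show ?thesis unfolding Z add_0_right using X by (rule sym)
    qed
  qed
  have "ps (\<lambda>n. p n * q n) z = complex_of_real (1 - a) * ps (\<lambda>n. f n * q n) z + complex_of_real a"
    unfolding eq by (rule ps_affine[OF good_mult[OF gf q] z])
  then have "Re (ps (\<lambda>n. p n * q n) z) = (1 - a) * Re (ps (\<lambda>n. f n * q n) z) + a" by simp
  moreover have "(1 - a) * Re (ps (\<lambda>n. f n * q n) z) \<ge> (1 - a) * (2 * b - 1)"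
    using H a by (intro mult_left_mono) auto
  ultimately show ?thesis by simp
qed

lemma R0:
  fixes x y r :: real
  assumes xy: "x\<^sup>2 + y\<^sup>2 = r\<^sup>2" and r: "0 \<le> r" "r < 1"
  shows "1 / (1 + r) \<le> (1 - x) / ((1 - x)\<^sup>2 + y\<^sup>2)"
proof -
  have "x\<^sup>2 \<le> r\<^sup>2" using xy by (metis le_add_same_cancel1 zero_le_power2)
  then have "\<bar>x\<bar> \<le> r" using r by (metis abs_le_square_iff abs_of_nonneg)
  then have x: "- r \<le> x" "x \<le> r" by auto
  define D where "D = (1 - x)\<^sup>2 + y\<^sup>2"
  have D: "D = 1 - 2 * x + r\<^sup>2" using xy by (simp add: D_def power2_eq_square algebra_simps)
  have p: "(1 - r) * (1 - r) > 0" using r by simp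
  have e: "(1 - r) * (1 - r) = 1 - 2*r + r*r" by (simp add: algebra_simps)
  have Dpos: "D > 0" using x e p unfolding D power2_eq_square by linarith
  have key: "(1 - x) * (1 + r) - D = (r + x) * (1 - r)" unfolding D by (simp add: algebra_simps power2_eq_square)
  have "(r + x) * (1 - r) \<ge> 0" using x r by simp
  then have "D \<le> (1 - x) * (1 + r)" using key by simp
  then show ?thesis using Dpos r unfolding D_def[symmetric] by (simp add: field_simps)
qed

lemma R1:
  fixes u :: complex assumes "norm u < 1"
  shows "1 / (1 + norm u) \<le> Re (1 / (1 - u))"
proof -
  have "Re (1 / (1 - u)) = (1 - Re u) / ((1 - Re u)\<^sup>2 + (Im u)\<^sup>2)"
    by (simp add: Re_divide)
  moreover have "(Re u)\<^sup>2 + (Im u)\<^sup>2 = (norm u)\<^sup>2" by (simp add: cmod_power2)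
  ultimately show ?thesis using R0[of "Re u" "Im u" "norm u"] assms by simp
qed

lemma powr_int:
  fixes \<beta> :: real assumes \<beta>: "\<beta> > 0"
  shows "((\<lambda>t. (t powr \<beta>) ^ n) has_integral 1 / (\<beta> * real n + 1)) {0..1}"
proof -
  define r where "r = \<beta> * real n + 1"
  have r: "r > 0" unfolding r_def using \<beta> by (simp add: add_nonneg_pos)
  define F where "F = (\<lambda>t::real. t powr r / r)"
  have "((\<lambda>t. (t powr \<beta>) ^ n) has_integral (F 1 - F 0)) {0..1}"
  proof (rule fundamental_theorem_of_calculus_interior_strong[where S="{}"])
    fix x :: real assume x: "x \<in> {0<..<1} - {}"
    have d: "((\<lambda>t. t powr r) has_real_derivative r * x powr (r - 1)) (at x)"
      by (rule has_real_derivative_powr) (use x in auto)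
    then have "(F has_real_derivative (r * x powr (r - 1)) / r) (at x)" unfolding F_def by (rule DERIV_cdivide)
    moreover have "(r * x powr (r - 1)) / r = (x powr \<beta>) ^ n"
    proof -
      have "(r * x powr (r - 1)) / r = x powr (\<beta> * real n)" using r by (simp add: r_def)
      also have "\<dots> = (x powr \<beta>) powr real n" by (simp add: powr_powr)
      also have "\<dots> = (x powr \<beta>) ^ n" by (rule powr_realpow) (use x in simp)
      finally show ?thesis .
    qed
    ultimately show "(F has_vector_derivative (x powr \<beta>) ^ n) (at x)"
      by (simp add: has_real_derivative_iff_has_vector_derivative)
  next
    show "continuous_on {0..1} F" unfolding F_def
      by (intro continuous_intros continuous_on_powr') (use r in auto)
  qed auto
  moreover have "F 1 - F 0 = 1 / (\<beta> * real n + 1)" by (simp add: F_def r_def)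
  ultimately show ?thesis by simp
qed

lemma powr_le1':
  fixes t \<beta> :: real assumes "t \<in> {0..1}" "\<beta> > 0"
  shows "0 \<le> t powr \<beta>" "t powr \<beta> \<le> 1"
  using assms by (auto intro: powr_le1)

lemma GEO:
  fixes \<beta> :: real and w :: complex
  assumes \<beta>: "\<beta> > 0" and w: "norm w < 1"
  shows "ps (\<lambda>n. complex_of_real (1 / (\<beta> * real n + 1))) w = integral {0..1} (\<lambda>t. 1 / (1 - complex_of_real (t powr \<beta>) * w))"
    and "(\<lambda>t. 1 / (1 - complex_of_real (t powr \<beta>) * w)) integrable_on {0..1}"
proof -
  define \<phi> where "\<phi> = (\<lambda>n t. complex_of_real ((t powr \<beta>) ^ n))"
  have c\<phi>: "continuous_on {0..1} (\<phi> n)" for n unfolding \<phi>_def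
    by (intro continuous_intros continuous_on_powr') (use \<beta> in auto)
  have b\<phi>: "norm (\<phi> n t) \<le> 1" if "t \<in> {0..1}" for n t
    using powr_le1'[OF that \<beta>] by (simp add: \<phi>_def norm_power power_le_one)
  have sw: "summable (\<lambda>n. norm (w ^ n))" using w by (simp add: norm_power summable_geometric)
  note I = INT[where a=0 and b=1 and g="\<lambda>_. 1" and \<phi>=\<phi> and c="\<lambda>n. w ^ n", OF _ c\<phi> b\<phi> sw]
  have int\<phi>: "integral {0..1} (\<lambda>t. 1 * \<phi> n t) = complex_of_real (1 / (\<beta> * real n + 1))" for n
    using has_integral_of_real[OF powr_int[OF \<beta>, of n], where 'b=complex]
    by (simp add: \<phi>_def integral_unique)
  have sumeq: "1 * (\<Sum>n. w ^ n * \<phi> n t) = 1 / (1 - complex_of_real (t powr \<beta>) * w)" if "t \<in> {0..1}" for t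
  proof -
    have "norm (complex_of_real (t powr \<beta>) * w) \<le> norm w"
      using powr_le1'[OF that \<beta>] by (simp add: norm_mult mult_left_le_one_le)
    then have n: "norm (complex_of_real (t powr \<beta>) * w) < 1" using w by simp
    have "(\<Sum>n. w ^ n * \<phi> n t) = (\<Sum>n. (complex_of_real (t powr \<beta>) * w) ^ n)"
      by (simp add: \<phi>_def power_mult_distrib mult_ac)
    also have "\<dots> = 1 / (1 - complex_of_real (t powr \<beta>) * w)" by (rule suminf_geometric[OF n])
    finally show ?thesis by simp
  qed
  have "(\<lambda>n. w ^ n * complex_of_real (1 / (\<beta> * real n + 1))) sums integral {0..1} (\<lambda>t. 1 / (1 - complex_of_real (t powr \<beta>) * w))"
  proof -
    have ie: "integral {0..1} (\<lambda>t. 1 * (\<Sum>n. w ^ n * \<phi> n t)) = integral {0..1} (\<lambda>t. 1 / (1 - complex_of_real (t powr \<beta>) * w))"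
      by (rule integral_cong) (rule sumeq)
    show ?thesis using I(1)[OF continuous_on_const] unfolding int\<phi> ie .
  qed
  then show "ps (\<lambda>n. complex_of_real (1 / (\<beta> * real n + 1))) w = integral {0..1} (\<lambda>t. 1 / (1 - complex_of_real (t powr \<beta>) * w))"
    unfolding ps_def by (simp add: sums_iff mult_ac)
  show "(\<lambda>t. 1 / (1 - complex_of_real (t powr \<beta>) * w)) integrable_on {0..1}"
    using I(2)[OF continuous_on_const] by (rule integrable_eq) (blast intro: sumeq)+
qed

lemma Re_integral:
  assumes "f integrable_on S" shows "Re (integral S f) = integral S (\<lambda>t. Re (f t))"
  using integral_linear[OF assms bounded_linear_Re] by (simp add: o_def)

lemma Re_integrable:
  assumes "f integrable_on S" shows "(\<lambda>t. Re (f t)) integrable_on S"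
  using integrable_linear[OF assms bounded_linear_Re] by (simp add: o_def)

lemma Psi_bound:
  fixes \<beta> :: real and w :: complex
  assumes \<beta>: "\<beta> > 0" and w: "norm w < 1"
  shows "Re (ps (\<lambda>n. complex_of_real (1 / (\<beta> * real n + 1))) w) \<ge> 1 / 2"
proof -
  have "1 / 2 = integral {0..1::real} (\<lambda>t. 1 / 2 :: real)" by simp
  also have "\<dots> \<le> integral {0..1} (\<lambda>t. Re (1 / (1 - complex_of_real (t powr \<beta>) * w)))"
  proof (rule integral_le)
    show "(\<lambda>t. Re (1 / (1 - complex_of_real (t powr \<beta>) * w))) integrable_on {0..1}"
      by (rule Re_integrable[OF GEO(2)[OF \<beta> w]])
  next
    fix t :: real assume t: "t \<in> {0..1}"
    have "norm (complex_of_real (t powr \<beta>) * w) \<le> norm w"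
      using powr_le1'[OF t \<beta>] by (simp add: norm_mult mult_left_le_one_le)
    then have n: "norm (complex_of_real (t powr \<beta>) * w) < 1" using w by simp
    have "1 / 2 \<le> 1 / (1 + norm (complex_of_real (t powr \<beta>) * w))"
      by (rule divide_left_mono) (use n in \<open>auto intro!: mult_pos_pos add_pos_nonneg\<close>)
    also have "\<dots> \<le> Re (1 / (1 - complex_of_real (t powr \<beta>) * w))" by (rule R1[OF n])
    finally show "1 / 2 \<le> Re (1 / (1 - complex_of_real (t powr \<beta>) * w))" .
  qed auto
  also have "\<dots> = Re (ps (\<lambda>n. complex_of_real (1 / (\<beta> * real n + 1))) w)"
    unfolding GEO(1)[OF \<beta> w] by (rule Re_integral[OF GEO(2)[OF \<beta> w], symmetric])
  finally show ?thesis .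
qed

lemma lin_int: "((\<lambda>t::real. 8/9 - 4 * t / 9) has_integral (2/3 :: real)) {0..1}"
proof -
  define G where "G = (\<lambda>t::real. 8 * t / 9 - 2 * t\<^sup>2 / 9)"
  have "((\<lambda>t::real. 8/9 - 4 * t / 9) has_integral (G 1 - G 0)) {0..1}"
  proof (rule fundamental_theorem_of_calculus)
    fix x :: real assume "x \<in> {0..1}"
    have "(G has_real_derivative (8/9 - 4 * x / 9)) (at x within {0..1})"
      unfolding G_def by (auto intro!: derivative_eq_intros simp: field_simps)
    then show "(G has_vector_derivative (8/9 - 4 * x / 9)) (at x within {0..1})"
      by (simp add: has_real_derivative_iff_has_vector_derivative)
  qed simp
  moreover have "G 1 - G 0 = 2/3" by (simp add: G_def)
  ultimately show ?thesis by simp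
qed

lemma Phi_bound:
  fixes w :: complex
  assumes w: "norm w < 1"
  shows "Re (ps (\<lambda>n. complex_of_real (1 / (1 * real n + 1))) w) \<ge> 2 / 3"
proof -
  have "2 / 3 = integral {0..1::real} (\<lambda>t. 8/9 - 4 * t / 9)" using lin_int by (simp add: integral_unique)
  also have "\<dots> \<le> integral {0..1} (\<lambda>t. Re (1 / (1 - complex_of_real (t powr 1) * w)))"
  proof (rule integral_le)
    show "(\<lambda>t. Re (1 / (1 - complex_of_real (t powr 1) * w))) integrable_on {0..1}"
      by (rule Re_integrable[OF GEO(2)[OF _ w]]) simp
    show "(\<lambda>t::real. 8/9 - 4 * t / 9) integrable_on {0..1}" using lin_int by blast
  next
    fix t :: real assume t: "t \<in> {0..1}"
    have "t * norm w \<le> t * 1" by (rule mult_left_mono) (use w t in auto)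
    then have nu: "norm (complex_of_real (t powr 1) * w) \<le> t"
      using t by (simp add: norm_mult abs_of_nonneg)
    have "norm (complex_of_real (t powr 1) * w) \<le> norm w"
      using t by (simp add: norm_mult mult_left_le_one_le abs_of_nonneg)
    then have n: "norm (complex_of_real (t powr 1) * w) < 1" using w by simp
    have t0: "0 \<le> t" "t \<le> 1" using t by auto
    have "(8/9 - 4 * t / 9) * (1 + t) \<le> 1"
    proof -
      have "1 - (8/9 - 4 * t / 9) * (1 + t) = (2 * t - 1)\<^sup>2 / 9" by (simp add: field_simps power2_eq_square)
      then show ?thesis by (smt (verit) zero_le_divide_iff zero_le_power2)
    qed
    then have "8/9 - 4 * t / 9 \<le> 1 / (1 + t)" using t0 by (simp add: field_simps)
    also have "\<dots> \<le> 1 / (1 + norm (complex_of_real (t powr 1) * w))"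
      using nu t0 by (intro divide_left_mono) (auto intro!: mult_pos_pos add_pos_nonneg)
    also have "\<dots> \<le> Re (1 / (1 - complex_of_real (t powr 1) * w))" by (rule R1[OF n])
    finally show "8/9 - 4 * t / 9 \<le> Re (1 / (1 - complex_of_real (t powr 1) * w))" .
  qed
  also have "\<dots> = Re (ps (\<lambda>n. complex_of_real (1 / (1 * real n + 1))) w)"
    unfolding GEO(1)[OF zero_less_one w] by (rule Re_integral[OF GEO(2)[OF zero_less_one w], symmetric])
  finally show ?thesis .
qed

definition phiS :: "nat \<Rightarrow> complex" where "phiS n = complex_of_real (1 / (1 * real n + 1))"
definition psiS :: "real \<Rightarrow> nat \<Rightarrow> complex" where "psiS \<beta> n = complex_of_real (1 / (\<beta> * real n + 1))"
definition ES :: "real \<Rightarrow> nat \<Rightarrow> complex" where "ES \<beta> n = phiS n * phiS n * psiS \<beta> n"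

lemma phiS_eq: "phiS = (\<lambda>n. complex_of_real (1 / (1 * real n + 1)))" by (rule ext) (simp only: phiS_def)
lemma psiS_eq: "psiS \<beta> = (\<lambda>n. complex_of_real (1 / (\<beta> * real n + 1)))" by (rule ext) (simp only: psiS_def)
lemma phiS0: "phiS 0 = 1" by (simp add: phiS_def)
lemma psiS0: "psiS \<beta> 0 = 1" by (simp add: psiS_def)

lemma good_phiS: "good phiS"
proof (rule good_bounded[of _ 1])
  fix n show "norm (phiS n) \<le> 1" unfolding phiS_def norm_of_real by simp
qed

lemma good_psiS: assumes "\<beta> \<ge> 0" shows "good (psiS \<beta>)"
proof (rule good_bounded[of _ 1])
  fix n
  have "1 \<le> \<beta> * real n + 1" using assms by simp
  then show "norm (psiS \<beta> n) \<le> 1" unfolding psiS_def norm_of_real by simp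
qed

lemma good_ES: "\<beta> \<ge> 0 \<Longrightarrow> good (ES \<beta>)"
  unfolding ES_def by (intro good_mult good_phiS good_psiS)

lemma ES_eq: "ES \<beta> = (\<lambda>n. phiS n * phiS n * psiS \<beta> n)" by (rule ext) (simp only: ES_def)

lemma ES0: "ES \<beta> 0 = 1" by (simp add: ES_def phiS_def psiS_def)

lemma Psi_bound0:
  assumes \<beta>: "\<beta> \<ge> 0" and w: "norm w < 1"
  shows "Re (ps (psiS \<beta>) w) \<ge> 1 / 2"
proof (cases "\<beta> = 0")
  case False
  then have "\<beta> > 0" using \<beta> by simp
  then show ?thesis unfolding psiS_eq by (rule Psi_bound[OF _ w])
next
  case True
  have "ps (psiS \<beta>) w = (\<Sum>n. w ^ n)" by (simp add: ps_def psiS_def True)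
  also have "\<dots> = 1 / (1 - w)" by (rule suminf_geometric[OF w])
  finally have e: "ps (psiS \<beta>) w = 1 / (1 - w)" .
  have "1 / 2 \<le> 1 / (1 + norm w)"
    by (rule divide_left_mono) (use w in \<open>auto intro!: mult_pos_pos add_pos_nonneg\<close>)
  also have "\<dots> \<le> Re (1 / (1 - w))" by (rule R1[OF w])
  finally show ?thesis unfolding e .
qed

lemma ES_bound:
  assumes \<beta>: "\<beta> \<ge> 0" and w: "norm w < 1"
  shows "Re (ps (ES \<beta>) w) \<ge> 7 / 9"
proof -
  have pp: "Re (ps (\<lambda>n. phiS n * phiS n) v) \<ge> 7 / 9" if v: "norm v < 1" for v
  proof -
    have b: "\<And>w. norm w < 1 \<Longrightarrow> Re (ps phiS w) \<ge> 2/3" unfolding phiS_eq by (rule Phi_bound)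
    have "Re (ps (\<lambda>n. phiS n * phiS n) v) \<ge> 2/3 + (1 - 2/3) * (2 * (2/3) - 1)"
      by (rule lemH2[OF good_phiS good_phiS phiS0 phiS0 _ b b v]) simp
    then show ?thesis by simp
  qed
  have "Re (ps (\<lambda>n. (phiS n * phiS n) * psiS \<beta> n) w) \<ge> 7/9 + (1 - 7/9) * (2 * (1/2) - 1)"
    by (rule lemH2[OF good_mult[OF good_phiS good_phiS] good_psiS[OF \<beta>] _ psiS0 _ pp Psi_bound0[OF \<beta>] w])
       (simp_all add: phiS0)
  then show ?thesis unfolding ES_eq by simp
qed

definition kS :: "real \<Rightarrow> real \<Rightarrow> nat \<Rightarrow> complex" where
  "kS \<tau> \<beta> n = complex_of_real \<tau> * ES \<beta> n + (if n = 0 then complex_of_real (1 - \<tau>) else 0)"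

lemma chain:
  assumes \<beta>: "\<beta> \<ge> 0" and \<tau>: "0 \<le> \<tau>" "\<tau> \<le> 1"
    and F: "good F" "F 0 = 1" "\<And>w. norm w < 1 \<Longrightarrow> Re (ps F w) \<ge> 0"
    and G: "good G" "G 0 = 1" "\<And>w. norm w < 1 \<Longrightarrow> Re (ps G w) \<ge> 0"
    and z: "norm z < 1"
  shows "Re (ps (\<lambda>n. F n * (G n * kS \<tau> \<beta> n)) z) \<ge> 1 / 9"
proof -
  have GE: "Re (ps (\<lambda>n. G n * ES \<beta> n) w) \<ge> 2 * (7/9) - 1" if "norm w < 1" for w
    by (rule lemH[OF G(1) good_ES[OF \<beta>] G(2) ES0 G(3) ES_bound[OF \<beta>] that])
  have eqk: "(\<lambda>n. G n * kS \<tau> \<beta> n) = (\<lambda>n. complex_of_real \<tau> * (G n * ES \<beta> n) + (if n = 0 then complex_of_real (1 - \<tau>) else 0))"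
    by (auto simp: fun_eq_iff kS_def G(2) ES0 algebra_simps)
  have gGk: "good (\<lambda>n. G n * kS \<tau> \<beta> n)"
    unfolding eqk by (rule good_affine[OF good_mult[OF G(1) good_ES[OF \<beta>]]])
  have Gk0: "G 0 * kS \<tau> \<beta> 0 = 1" by (simp add: kS_def G(2) ES0)
  have Gk: "Re (ps (\<lambda>n. G n * kS \<tau> \<beta> n) w) \<ge> 5 / 9" if w: "norm w < 1" for w
  proof -
    have "ps (\<lambda>n. G n * kS \<tau> \<beta> n) w = complex_of_real \<tau> * ps (\<lambda>n. G n * ES \<beta> n) w + complex_of_real (1 - \<tau>)"
      unfolding eqk by (rule ps_affine[OF good_mult[OF G(1) good_ES[OF \<beta>]] w])
    then have "Re (ps (\<lambda>n. G n * kS \<tau> \<beta> n) w) = \<tau> * Re (ps (\<lambda>n. G n * ES \<beta> n) w) + (1 - \<tau>)"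
      by simp
    moreover have "\<tau> * Re (ps (\<lambda>n. G n * ES \<beta> n) w) \<ge> \<tau> * (5/9)"
      using GE[OF w] \<tau> by (intro mult_left_mono) auto
    ultimately show ?thesis using \<tau> by simp
  qed
  have "Re (ps (\<lambda>n. F n * (G n * kS \<tau> \<beta> n)) z) \<ge> 2 * (5/9) - 1"
    by (rule lemH[OF F(1) gGk F(2) Gk0 F(3) Gk z])
  then show ?thesis by simp
qed

lemma hd_series:
  assumes g: "g holomorphic_on ball 0 1" and z: "norm z < 1"
  shows "(\<lambda>n. tcoef g (n + k) * (fact (n + k) / fact n) * z ^ n) sums (deriv ^^ k) g z"
proof -
  have h: "(deriv ^^ k) g holomorphic_on ball 0 1" by (rule holomorphic_higher_deriv[OF g]) simp
  have "(\<lambda>n. (deriv ^^ n) ((deriv ^^ k) g) 0 / fact n * (z - 0) ^ n) sums (deriv ^^ k) g z"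
    by (rule holomorphic_power_series[OF h]) (use z in simp)
  moreover have "(deriv ^^ n) ((deriv ^^ k) g) 0 / fact n = tcoef g (n + k) * (fact (n + k) / fact n)" for n
  proof -
    have "(deriv ^^ n) ((deriv ^^ k) g) = (deriv ^^ (n + k)) g" by (simp add: funpow_add)
    moreover have "(fact (n + k) :: complex) \<noteq> 0" by simp
    ultimately show ?thesis by (simp add: tcoef_def)
  qed
  ultimately show ?thesis by simp
qed

definition Acoef :: "real \<Rightarrow> real \<Rightarrow> nat \<Rightarrow> complex" where
  "Acoef \<gamma> \<delta> n = complex_of_real ((real n + 1) * (\<gamma> + \<delta> * real n + (\<delta> - \<gamma>) / 2 * real n * (real n - 1)))"

lemma fact_ratios:
  "(fact (n + 1) / fact n :: complex) = of_nat (n + 1)"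
  "(fact (n + 2) / fact n :: complex) = of_nat (n + 2) * of_nat (n + 1)"
  "(fact (n + 3) / fact n :: complex) = of_nat (n + 3) * of_nat (n + 2) * of_nat (n + 1)"
  by (simp_all add: fact_Suc numeral_2_eq_2 numeral_3_eq_3 field_simps del: of_nat_Suc)

lemma Lop_series:
  assumes g: "g holomorphic_on ball 0 1" and z: "norm z < 1"
  shows "(\<lambda>n. Acoef \<gamma> \<delta> n * tcoef g (n + 1) * z ^ n) sums Lop \<gamma> \<delta> g z"
proof -
  define a where "a = tcoef g"
  have D1: "(\<lambda>n. a (n + 1) * of_nat (n + 1) * z ^ n) sums deriv g z"
    using hd_series[OF g z, of 1] by (simp add: a_def fact_ratios)
  have D2: "(\<lambda>n. a (n + 2) * (of_nat (n + 2) * of_nat (n + 1)) * z ^ n) sums (deriv ^^ 2) g z"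
    using hd_series[OF g z, of 2] by (simp only: a_def fact_ratios)
  have D3: "(\<lambda>n. a (n + 3) * (of_nat (n + 3) * of_nat (n + 2) * of_nat (n + 1)) * z ^ n) sums (deriv ^^ 3) g z"
    using hd_series[OF g z, of 3] by (simp only: a_def fact_ratios)
  define h2 where "h2 = (\<lambda>n. a (n + 1) * (of_nat (n + 1) * of_nat n) * z ^ n)"
  have "(\<lambda>n. z * (a (n + 2) * (of_nat (n + 2) * of_nat (n + 1)) * z ^ n)) sums (z * (deriv ^^ 2) g z)"
    by (rule sums_mult[OF D2])
  moreover have "(\<lambda>n. z * (a (n + 2) * (of_nat (n + 2) * of_nat (n + 1)) * z ^ n)) = (\<lambda>n. h2 (Suc n))"
    by (auto simp: h2_def fun_eq_iff algebra_simps numeral_2_eq_2)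
  ultimately have "(\<lambda>n. h2 (Suc n)) sums (z * (deriv ^^ 2) g z)" by simp
  then have "h2 sums (z * (deriv ^^ 2) g z + h2 0)" by (rule sums_Suc_iff[THEN iffD1])
  then have H2: "h2 sums (z * (deriv ^^ 2) g z)" by (simp add: h2_def)
  define h3 where "h3 = (\<lambda>n. a (n + 1) * (of_nat (n + 1) * of_nat n * (of_nat n - 1)) * z ^ n)"
  have "(\<lambda>n. z\<^sup>2 * (a (n + 3) * (of_nat (n + 3) * of_nat (n + 2) * of_nat (n + 1)) * z ^ n)) sums (z\<^sup>2 * (deriv ^^ 3) g z)"
    by (rule sums_mult[OF D3])
  moreover have "(\<lambda>n. z\<^sup>2 * (a (n + 3) * (of_nat (n + 3) * of_nat (n + 2) * of_nat (n + 1)) * z ^ n)) = (\<lambda>n. h3 (Suc (Suc n)))"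
    by (auto simp: h3_def fun_eq_iff algebra_simps numeral_2_eq_2 numeral_3_eq_3 power2_eq_square)
  ultimately have "(\<lambda>n. h3 (Suc (Suc n))) sums (z\<^sup>2 * (deriv ^^ 3) g z)" by simp
  then have "(\<lambda>n. h3 (Suc n)) sums (z\<^sup>2 * (deriv ^^ 3) g z + h3 (Suc 0))"
    by (rule sums_Suc_iff[where f="\<lambda>n. h3 (Suc n)", THEN iffD1])
  then have "(\<lambda>n. h3 (Suc n)) sums (z\<^sup>2 * (deriv ^^ 3) g z)" by (simp add: h3_def)
  then have "h3 sums (z\<^sup>2 * (deriv ^^ 3) g z + h3 0)" by (rule sums_Suc_iff[THEN iffD1])
  then have H3: "h3 sums (z\<^sup>2 * (deriv ^^ 3) g z)" by (simp add: h3_def)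
  have "(\<lambda>n. of_real \<gamma> * (a (n + 1) * of_nat (n + 1) * z ^ n) + of_real \<delta> * h2 n + of_real ((\<delta> - \<gamma>) / 2) * h3 n)
        sums (of_real \<gamma> * deriv g z + of_real \<delta> * (z * (deriv ^^ 2) g z) + of_real ((\<delta> - \<gamma>) / 2) * (z\<^sup>2 * (deriv ^^ 3) g z))"
    by (intro sums_add sums_mult D1 H2 H3)
  moreover have "(\<lambda>n. of_real \<gamma> * (a (n + 1) * of_nat (n + 1) * z ^ n) + of_real \<delta> * h2 n + of_real ((\<delta> - \<gamma>) / 2) * h3 n)
     = (\<lambda>n. Acoef \<gamma> \<delta> n * tcoef g (n + 1) * z ^ n)"
  proof
    fix n
    define c where "c = complex_of_real ((\<delta> - \<gamma>) / 2)"
    have AE: "Acoef \<gamma> \<delta> n = of_real \<gamma> * of_nat (n + 1) + of_real \<delta> * (of_nat (n + 1) * of_nat n) + c * (of_nat (n + 1) * of_nat n * (of_nat n - 1))"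
    proof -
      have R: "(real n + 1) * (\<gamma> + \<delta> * real n + (\<delta> - \<gamma>) / 2 * real n * (real n - 1)) = \<gamma> * (real n + 1) + \<delta> * ((real n + 1) * real n) + ((\<delta> - \<gamma>) / 2) * ((real n + 1) * real n * (real n - 1))"
        by (simp add: field_simps)
      show ?thesis unfolding Acoef_def R c_def by (simp only: of_real_add of_real_mult of_real_diff of_real_of_nat_eq of_real_1 of_nat_add of_nat_1 add.commute)
    qed
    show "of_real \<gamma> * (a (n + 1) * of_nat (n + 1) * z ^ n) + of_real \<delta> * h2 n + of_real ((\<delta> - \<gamma>) / 2) * h3 n
      = Acoef \<gamma> \<delta> n * tcoef g (n + 1) * z ^ n"
      unfolding c_def[symmetric] AE by (simp add: h2_def h3_def a_def algebra_simps)
  qed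
  moreover have "of_real \<gamma> * deriv g z + of_real \<delta> * (z * (deriv ^^ 2) g z) + of_real ((\<delta> - \<gamma>) / 2) * (z\<^sup>2 * (deriv ^^ 3) g z) = Lop \<gamma> \<delta> g z"
    by (simp add: Lop_def mult_ac)
  ultimately show ?thesis by simp
qed

lemma Lop_ps:
  assumes g: "g holomorphic_on ball 0 1"
  shows "good (\<lambda>n. Acoef \<gamma> \<delta> n * tcoef g (n + 1))"
    and "\<And>z. norm z < 1 \<Longrightarrow> ps (\<lambda>n. Acoef \<gamma> \<delta> n * tcoef g (n + 1)) z = Lop \<gamma> \<delta> g z"
proof -
  show "good (\<lambda>n. Acoef \<gamma> \<delta> n * tcoef g (n + 1))" unfolding good_def
    using Lop_series[OF g] sums_summable by blast
  show "ps (\<lambda>n. Acoef \<gamma> \<delta> n * tcoef g (n + 1)) z = Lop \<gamma> \<delta> g z" if "norm z < 1" for z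
    using Lop_series[OF g that] by (simp add: ps_def sums_iff)
qed

lemma ps_at0: "ps c 0 = c 0" by (simp add: ps_def)
lemma tcoef0: "tcoef g 0 = g 0" by (simp add: tcoef_def)
lemma tcoef1: "tcoef g 1 = deriv g 0" by (simp add: tcoef_def)

lemma aconv_props:
  assumes "s1 holomorphic_on ball 0 1" "s2 holomorphic_on ball 0 1"
  shows "aconv s1 s2 = ps (\<lambda>n. tcoef s1 n * tcoef s2 n)"
    and "aconv s1 s2 holomorphic_on ball 0 1"
    and "tcoef (aconv s1 s2) n = tcoef s1 n * tcoef s2 n"
proof -
  show e: "aconv s1 s2 = ps (\<lambda>n. tcoef s1 n * tcoef s2 n)" by (rule ext) (simp add: aconv_def ps_def)
  have g: "good (\<lambda>n. tcoef s1 n * tcoef s2 n)" by (intro good_mult holo_good assms)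
  show "aconv s1 s2 holomorphic_on ball 0 1" unfolding e by (rule good_holo[OF g])
  show "tcoef (aconv s1 s2) n = tcoef s1 n * tcoef s2 n" unfolding e by (rule good_tcoef[OF g])
qed

definition normF :: "real \<Rightarrow> real \<Rightarrow> (nat \<Rightarrow> complex) \<Rightarrow> nat \<Rightarrow> complex" where
  "normF \<gamma> lam X n = complex_of_real (1 / (\<gamma> - lam)) * X n + (if n = 0 then complex_of_real (- lam / (\<gamma> - lam)) else 0)"

lemma normF_props:
  assumes gX: "good X" and X0: "X 0 = complex_of_real \<gamma>" and lg: "lam < \<gamma>"
    and pos: "\<And>w. norm w < 1 \<Longrightarrow> Re (ps X w) > lam"
  shows "good (normF \<gamma> lam X)" and "normF \<gamma> lam X 0 = 1"
    and "\<And>w. norm w < 1 \<Longrightarrow> Re (ps (normF \<gamma> lam X) w) \<ge> 0"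
    and "\<And>n. n > 0 \<Longrightarrow> normF \<gamma> lam X n = X n / complex_of_real (\<gamma> - lam)"
proof -
  have feq: "normF \<gamma> lam X = (\<lambda>n. complex_of_real (1 / (\<gamma> - lam)) * X n + (if n = 0 then complex_of_real (- lam / (\<gamma> - lam)) else 0))"
    by (rule ext) (simp only: normF_def)
  show "good (normF \<gamma> lam X)" unfolding feq by (rule good_affine[OF gX])
  have ra: "1 / (\<gamma> - lam) * \<gamma> + - lam / (\<gamma> - lam) = (1::real)"
  proof -
    have "1 / (\<gamma> - lam) * \<gamma> + - lam / (\<gamma> - lam) = \<gamma> / (\<gamma> - lam) - lam / (\<gamma> - lam)" by simp
    also have "\<dots> = (\<gamma> - lam) / (\<gamma> - lam)" by (rule diff_divide_distrib[symmetric])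
    also have "\<dots> = 1" using lg by simp
    finally show ?thesis .
  qed
  have "normF \<gamma> lam X 0 = complex_of_real (1 / (\<gamma> - lam)) * complex_of_real \<gamma> + complex_of_real (- lam / (\<gamma> - lam))"
    by (simp only: normF_def X0 if_True simp_thms)
  also have "\<dots> = complex_of_real (1 / (\<gamma> - lam) * \<gamma> + - lam / (\<gamma> - lam))" by (simp only: of_real_add of_real_mult)
  finally show "normF \<gamma> lam X 0 = 1" unfolding ra by simp
  show "Re (ps (normF \<gamma> lam X) w) \<ge> 0" if w: "norm w < 1" for w
  proof -
    have "ps (normF \<gamma> lam X) w = complex_of_real (1 / (\<gamma> - lam)) * ps X w + complex_of_real (- lam / (\<gamma> - lam))"
      unfolding feq by (rule ps_affine[OF gX w])
    then have "Re (ps (normF \<gamma> lam X) w) = (1 / (\<gamma> - lam)) * Re (ps X w) + (- lam / (\<gamma> - lam))"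
      by (simp only: plus_complex.sel Re_ofreal_mult Re_complex_of_real)
    also have "\<dots> = Re (ps X w) / (\<gamma> - lam) - lam / (\<gamma> - lam)" by simp
    also have "\<dots> = (Re (ps X w) - lam) / (\<gamma> - lam)" by (rule diff_divide_distrib[symmetric])
    finally show ?thesis using pos[OF w] lg by simp
  qed
  show "normF \<gamma> lam X n = X n / complex_of_real (\<gamma> - lam)" if "n > 0" for n
    using that by (simp add: normF_def)
qed

lemma Re_bound:
  assumes "norm \<sigma> = 1" "cmod L < Re (X - complex_of_real lam)"
  shows "Re (X + \<sigma> * L) > lam"
proof -
  have "- Re (\<sigma> * L) \<le> cmod (\<sigma> * L)" using abs_Re_le_cmod[of "\<sigma> * L"] by linarith
  also have "\<dots> = cmod L" using assms(1) by (simp add: norm_mult)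
  finally show ?thesis using assms(2) by simp
qed

lemma coef_alg:
  fixes A gl a a' b b' e :: complex
  assumes "A \<noteq> 0" "gl \<noteq> 0"
  shows "A * (a * a') + e * (A * (b * b')) =
     gl / 2 * ((A * a + 1 * (A * b)) / gl * ((A * a' + e * (A * b')) / gl * (gl / A))) +
     gl / 2 * ((A * a + (-1) * (A * b)) / gl * ((A * a' + (- e) * (A * b')) / gl * (gl / A)))"
  using assms by (simp add: field_simps)

lemma Areal:
  fixes \<gamma> \<delta> :: real assumes "\<gamma> > 0"
  shows "(real n + 1) * (\<gamma> + \<delta> * real n + (\<delta> - \<gamma>) / 2 * real n * (real n - 1)) =
         \<gamma> * ((1 * real n + 1) * (1 * real n + 1) * ((\<delta> - \<gamma>) / (2 * \<gamma>) * real n + 1))"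
  using assms by (simp add: field_simps)

lemma Acoef_eq:
  fixes \<gamma> \<delta> :: real assumes "\<gamma> > 0"
  shows "Acoef \<gamma> \<delta> n = complex_of_real (\<gamma> * ((1 * real n + 1) * (1 * real n + 1) * ((\<delta> - \<gamma>) / (2 * \<gamma>) * real n + 1)))"
  unfolding Acoef_def Areal[OF assms] ..

lemma Acoef_nz:
  fixes \<gamma> \<delta> :: real assumes "\<gamma> > 0" "\<delta> \<ge> \<gamma>"
  shows "Acoef \<gamma> \<delta> n \<noteq> 0"
proof -
  have "(\<delta> - \<gamma>) / (2 * \<gamma>) * real n \<ge> 0" using assms by simp
  then have y: "(\<delta> - \<gamma>) / (2 * \<gamma>) * real n + 1 > 0" by (simp add: add_nonneg_pos)
  have "\<gamma> * ((1 * real n + 1) * (1 * real n + 1) * ((\<delta> - \<gamma>) / (2 * \<gamma>) * real n + 1)) > 0"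
    using assms y by (intro mult_pos_pos) auto
  then show ?thesis unfolding Acoef_eq[OF assms(1)] by (simp only: of_real_eq_0_iff)
qed

lemma Acoef0: "Acoef \<gamma> \<delta> 0 = complex_of_real \<gamma>" by (simp add: Acoef_def)

lemma kS_val:
  fixes \<gamma> \<delta> lam :: real assumes "\<gamma> > 0" "\<delta> \<ge> \<gamma>" "n > 0"
  shows "kS ((\<gamma> - lam) / \<gamma>) ((\<delta> - \<gamma>) / (2 * \<gamma>)) n = complex_of_real (\<gamma> - lam) / Acoef \<gamma> \<delta> n"
proof -
  define x where "x = 1 * real n + 1"
  define y where "y = (\<delta> - \<gamma>) / (2 * \<gamma>) * real n + 1"
  have xy: "x > 0" "y > 0" using assms by (simp_all add: x_def y_def add_nonneg_pos)
  have "kS ((\<gamma> - lam) / \<gamma>) ((\<delta> - \<gamma>) / (2 * \<gamma>)) n = complex_of_real ((\<gamma> - lam) / \<gamma> * (1 / x * (1 / x) * (1 / y)))"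
    using assms(3) by (simp only: kS_def ES_def phiS_def psiS_def x_def[symmetric] y_def[symmetric] of_real_mult
        if_not_P[OF less_not_refl2[OF assms(3)]] neq0_conv add_0_right)
  also have "\<dots> = complex_of_real ((\<gamma> - lam) / (\<gamma> * (x * x * y)))" using xy assms by (simp add: field_simps)
  also have "\<dots> = complex_of_real (\<gamma> - lam) / Acoef \<gamma> \<delta> n"
    unfolding Acoef_eq[OF assms(1)] x_def[symmetric] y_def[symmetric] by simp
  finally show ?thesis .
qed

lemma kS_0: "kS \<tau> \<beta> 0 = 1" by (simp add: kS_def ES0)

lemma Xprops:
  assumes gP: "good P" and gU: "good U"
    and psP: "\<And>w. norm w < 1 \<Longrightarrow> ps P w = Lop \<gamma> \<delta> s w"
    and psU: "\<And>w. norm w < 1 \<Longrightarrow> ps U w = Lop \<gamma> \<delta> t w"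
    and C: "\<forall>z\<in>ball 0 1. Re (Lop \<gamma> \<delta> s z - complex_of_real lam) > cmod (Lop \<gamma> \<delta> t z)"
    and \<sigma>: "norm \<sigma> = 1" and P0: "P 0 = complex_of_real \<gamma>" and U0: "U 0 = 0"
  shows "good (\<lambda>n. P n + \<sigma> * U n)" and "(\<lambda>n. P n + \<sigma> * U n) 0 = complex_of_real \<gamma>"
    and "\<And>w. norm w < 1 \<Longrightarrow> Re (ps (\<lambda>n. P n + \<sigma> * U n) w) > lam"
proof -
  have gU': "good (\<lambda>n. \<sigma> * U n)" by (rule ps_cmult(2)[OF gU, of 0]) simp
  show "good (\<lambda>n. P n + \<sigma> * U n)" by (rule ps_add(2)[OF gP gU', of 0]) simp
  show "(\<lambda>n. P n + \<sigma> * U n) 0 = complex_of_real \<gamma>" using P0 U0 by simp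
  show "Re (ps (\<lambda>n. P n + \<sigma> * U n) w) > lam" if w: "norm w < 1" for w
  proof -
    have "ps (\<lambda>n. P n + \<sigma> * U n) w = Lop \<gamma> \<delta> s w + \<sigma> * Lop \<gamma> \<delta> t w"
      using ps_add(1)[OF gP gU' w] ps_cmult(1)[OF gU w] psP[OF w] psU[OF w] by simp
    moreover have "cmod (Lop \<gamma> \<delta> t w) < Re (Lop \<gamma> \<delta> s w - complex_of_real lam)" using C w by simp
    ultimately show ?thesis using Re_bound[OF \<sigma>] by simp
  qed
qed

lemma tcoef1': "tcoef g (Suc 0) = deriv g 0" by (simp add: tcoef_def)

lemma good_kS: "\<beta> \<ge> 0 \<Longrightarrow> good (kS \<tau> \<beta>)"
proof -
  assume b: "\<beta> \<ge> 0"
  have "kS \<tau> \<beta> = (\<lambda>n. complex_of_real \<tau> * ES \<beta> n + (if n = 0 then complex_of_real (1 - \<tau>) else 0))"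
    by (rule ext) (simp only: kS_def)
  then show ?thesis using good_affine[OF good_ES[OF b]] by simp
qed

theorem theorem16:
  fixes \<gamma> \<delta> lam :: real and f1 f2 :: harm
  assumes "0 \<le> lam" and "lam < \<gamma>" and "\<gamma> \<le> \<delta>"
    and "f1 \<in> RH0 \<gamma> \<delta> lam" and "f2 \<in> RH0 \<gamma> \<delta> lam"
  shows "hconv f1 f2 \<in> RH0 \<gamma> \<delta> lam"
proof -
  obtain s1 t1 where f1: "f1 = (s1, t1)" by (cases f1)
  obtain s2 t2 where f2: "f2 = (s2, t2)" by (cases f2)
  have H1: "(s1, t1) \<in> H0" and C1: "\<forall>z\<in>ball 0 1. Re (Lop \<gamma> \<delta> s1 z - complex_of_real lam) > cmod (Lop \<gamma> \<delta> t1 z)"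
    using assms(4) unfolding f1 RH0_def by auto
  have H2: "(s2, t2) \<in> H0" and C2: "\<forall>z\<in>ball 0 1. Re (Lop \<gamma> \<delta> s2 z - complex_of_real lam) > cmod (Lop \<gamma> \<delta> t2 z)"
    using assms(5) unfolding f2 RH0_def by auto
  have hs1: "s1 holomorphic_on ball 0 1" and ht1: "t1 holomorphic_on ball 0 1"
    and s10: "s1 0 = 0" and ds1: "deriv s1 0 = 1" and t10: "t1 0 = 0" and dt1: "deriv t1 0 = 0"
    using H1 unfolding H0_def by auto
  have hs2: "s2 holomorphic_on ball 0 1" and ht2: "t2 holomorphic_on ball 0 1"
    and s20: "s2 0 = 0" and ds2: "deriv s2 0 = 1" and t20: "t2 0 = 0" and dt2: "deriv t2 0 = 0"
    using H2 unfolding H0_def by auto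
  have gpos: "\<gamma> > 0" using assms(1,2) by simp
  have gl: "\<gamma> - lam > 0" using assms(2) by simp
  define A where "A = Acoef \<gamma> \<delta>"
  have A0: "A 0 = complex_of_real \<gamma>" by (simp add: A_def Acoef0)
  have Anz: "A n \<noteq> 0" for n unfolding A_def by (rule Acoef_nz[OF gpos assms(3)])
  define a where "a = tcoef s1"
  define a' where "a' = tcoef s2"
  define b where "b = tcoef t1"
  define b' where "b' = tcoef t2"
  have a1: "a 1 = 1" "a' 1 = 1" "b 1 = 0" "b' 1 = 0"
    by (simp_all only: a_def a'_def b_def b'_def tcoef1 ds1 ds2 dt1 dt2)
  define S where "S = aconv s1 s2"
  define T where "T = aconv t1 t2"
  have hS: "S holomorphic_on ball 0 1" unfolding S_def by (rule aconv_props(2)[OF hs1 hs2])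
  have hT: "T holomorphic_on ball 0 1" unfolding T_def by (rule aconv_props(2)[OF ht1 ht2])
  have tS: "tcoef S n = a n * a' n" for n unfolding S_def a_def a'_def by (rule aconv_props(3)[OF hs1 hs2])
  have tT: "tcoef T n = b n * b' n" for n unfolding T_def b_def b'_def by (rule aconv_props(3)[OF ht1 ht2])
  have hc: "hconv f1 f2 = (S, T)" by (simp add: hconv_def f1 f2 S_def T_def)
  have inH0: "(S, T) \<in> H0"
  proof -
    have "S 0 = 0" using tS[of 0] by (simp add: tcoef0 a_def s10)
    moreover have "deriv S 0 = 1" using tS[of 1] a1 by (simp add: tcoef1')
    moreover have "T 0 = 0" using tT[of 0] by (simp add: tcoef0 b_def t10)
    moreover have "deriv T 0 = 0" using tT[of 1] a1 by (simp add: tcoef1')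
    ultimately show ?thesis using hS hT by (simp add: H0_def)
  qed
  define P1 where "P1 = (\<lambda>n. A n * a (n + 1))"
  define U1 where "U1 = (\<lambda>n. A n * b (n + 1))"
  define P2 where "P2 = (\<lambda>n. A n * a' (n + 1))"
  define U2 where "U2 = (\<lambda>n. A n * b' (n + 1))"
  have gP1: "good P1" and psP1: "\<And>w. norm w < 1 \<Longrightarrow> ps P1 w = Lop \<gamma> \<delta> s1 w"
    unfolding P1_def A_def a_def using Lop_ps[OF hs1] by auto
  have gU1: "good U1" and psU1: "\<And>w. norm w < 1 \<Longrightarrow> ps U1 w = Lop \<gamma> \<delta> t1 w"
    unfolding U1_def A_def b_def using Lop_ps[OF ht1] by auto
  have gP2: "good P2" and psP2: "\<And>w. norm w < 1 \<Longrightarrow> ps P2 w = Lop \<gamma> \<delta> s2 w"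
    unfolding P2_def A_def a'_def using Lop_ps[OF hs2] by auto
  have gU2: "good U2" and psU2: "\<And>w. norm w < 1 \<Longrightarrow> ps U2 w = Lop \<gamma> \<delta> t2 w"
    unfolding U2_def A_def b'_def using Lop_ps[OF ht2] by auto
  have P10: "P1 0 = complex_of_real \<gamma>" "P2 0 = complex_of_real \<gamma>" "U1 0 = 0" "U2 0 = 0"
    using a1 by (simp_all add: P1_def P2_def U1_def U2_def A0)
  define c1 where "c1 = (\<lambda>n. A n * (a (n + 1) * a' (n + 1)))"
  define c2 where "c2 = (\<lambda>n. A n * (b (n + 1) * b' (n + 1)))"
  have gc1: "good c1" and psc1: "\<And>w. norm w < 1 \<Longrightarrow> ps c1 w = Lop \<gamma> \<delta> S w"
    unfolding c1_def A_def using Lop_ps[OF hS] by (auto simp: tS)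
  have gc2: "good c2" and psc2: "\<And>w. norm w < 1 \<Longrightarrow> ps c2 w = Lop \<gamma> \<delta> T w"
    unfolding c2_def A_def using Lop_ps[OF hT] by (auto simp: tT)
  define \<tau> where "\<tau> = (\<gamma> - lam) / \<gamma>"
  define \<beta> where "\<beta> = (\<delta> - \<gamma>) / (2 * \<gamma>)"
  have \<tau>: "0 \<le> \<tau>" "\<tau> \<le> 1" using gpos gl assms(1) by (simp_all add: \<tau>_def field_simps)
  have \<beta>: "\<beta> \<ge> 0" using gpos assms(3) by (simp add: \<beta>_def)
  define k where "k = kS \<tau> \<beta>"
  have k0: "k 0 = 1" by (simp add: k_def kS_0)
  have kn: "k n = complex_of_real (\<gamma> - lam) / A n" if "n > 0" for n
    unfolding k_def \<tau>_def \<beta>_def A_def by (rule kS_val[OF gpos assms(3) that])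
  have gk: "good k" unfolding k_def by (rule good_kS[OF \<beta>])
  have main: "cmod (Lop \<gamma> \<delta> T z) < Re (Lop \<gamma> \<delta> S z - complex_of_real lam)" if zb: "z \<in> ball 0 1" for z
  proof -
    have z: "norm z < 1" using zb by simp
    define LS where "LS = Lop \<gamma> \<delta> S z"
    define LT where "LT = Lop \<gamma> \<delta> T z"
    define \<epsilon> where "\<epsilon> = (if LT = 0 then 1 else - complex_of_real (cmod LT) / LT)"
    have n\<epsilon>: "norm \<epsilon> = 1" by (simp add: \<epsilon>_def norm_divide)
    have \<epsilon>LT: "\<epsilon> * LT = - complex_of_real (cmod LT)" by (simp add: \<epsilon>_def)
    have n\<epsilon>': "norm (- \<epsilon>) = 1" using n\<epsilon> by simp
    have n1: "norm (1::complex) = 1" "norm (-1::complex) = 1" by simp_all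
    define Xp where "Xp = (\<lambda>n. P1 n + 1 * U1 n)"
    define Xm where "Xm = (\<lambda>n. P1 n + (-1) * U1 n)"
    define Yp where "Yp = (\<lambda>n. P2 n + \<epsilon> * U2 n)"
    define Ym where "Ym = (\<lambda>n. P2 n + (- \<epsilon>) * U2 n)"
    have XP: "good Xp" "Xp 0 = complex_of_real \<gamma>" "\<And>w. norm w < 1 \<Longrightarrow> Re (ps Xp w) > lam"
      using Xprops[OF gP1 gU1 psP1 psU1 C1 n1(1) P10(1) P10(3)] unfolding Xp_def by auto
    have XM: "good Xm" "Xm 0 = complex_of_real \<gamma>" "\<And>w. norm w < 1 \<Longrightarrow> Re (ps Xm w) > lam"
      using Xprops[OF gP1 gU1 psP1 psU1 C1 n1(2) P10(1) P10(3)] unfolding Xm_def by auto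
    have YP: "good Yp" "Yp 0 = complex_of_real \<gamma>" "\<And>w. norm w < 1 \<Longrightarrow> Re (ps Yp w) > lam"
      using Xprops[OF gP2 gU2 psP2 psU2 C2 n\<epsilon> P10(2) P10(4)] unfolding Yp_def by auto
    have YM: "good Ym" "Ym 0 = complex_of_real \<gamma>" "\<And>w. norm w < 1 \<Longrightarrow> Re (ps Ym w) > lam"
      using Xprops[OF gP2 gU2 psP2 psU2 C2 n\<epsilon>' P10(2) P10(4)] unfolding Ym_def by auto
    define Fp where "Fp = normF \<gamma> lam Xp"
    define Fm where "Fm = normF \<gamma> lam Xm"
    define Gp where "Gp = normF \<gamma> lam Yp"
    define Gm where "Gm = normF \<gamma> lam Ym"
    have FP: "good Fp" "Fp 0 = 1" "\<And>w. norm w < 1 \<Longrightarrow> Re (ps Fp w) \<ge> 0" "\<And>n. n > 0 \<Longrightarrow> Fp n = Xp n / complex_of_real (\<gamma> - lam)"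
      using normF_props[OF XP(1) XP(2) assms(2) XP(3)] unfolding Fp_def by auto
    have FM: "good Fm" "Fm 0 = 1" "\<And>w. norm w < 1 \<Longrightarrow> Re (ps Fm w) \<ge> 0" "\<And>n. n > 0 \<Longrightarrow> Fm n = Xm n / complex_of_real (\<gamma> - lam)"
      using normF_props[OF XM(1) XM(2) assms(2) XM(3)] unfolding Fm_def by auto
    have GP: "good Gp" "Gp 0 = 1" "\<And>w. norm w < 1 \<Longrightarrow> Re (ps Gp w) \<ge> 0" "\<And>n. n > 0 \<Longrightarrow> Gp n = Yp n / complex_of_real (\<gamma> - lam)"
      using normF_props[OF YP(1) YP(2) assms(2) YP(3)] unfolding Gp_def by auto
    have GM: "good Gm" "Gm 0 = 1" "\<And>w. norm w < 1 \<Longrightarrow> Re (ps Gm w) \<ge> 0" "\<And>n. n > 0 \<Longrightarrow> Gm n = Ym n / complex_of_real (\<gamma> - lam)"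
      using normF_props[OF YM(1) YM(2) assms(2) YM(3)] unfolding Gm_def by auto
    define Qp where "Qp = (\<lambda>n. Fp n * (Gp n * k n))"
    define Qm where "Qm = (\<lambda>n. Fm n * (Gm n * k n))"
    have Qp_b: "Re (ps Qp z) \<ge> 1 / 9" unfolding Qp_def k_def
      by (rule chain[OF \<beta> \<tau> FP(1) FP(2) _ GP(1) GP(2) _ z]) (simp_all add: FP(3) GP(3))
    have Qm_b: "Re (ps Qm z) \<ge> 1 / 9" unfolding Qm_def k_def
      by (rule chain[OF \<beta> \<tau> FM(1) FM(2) _ GM(1) GM(2) _ z]) (simp_all add: FM(3) GM(3))
    have gQp: "good Qp" unfolding Qp_def by (intro good_mult FP(1) GP(1) gk)
    have gQm: "good Qm" unfolding Qm_def by (intro good_mult FM(1) GM(1) gk)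
    define x where "x = complex_of_real (\<gamma> - lam) / 2"
    have coef: "c1 n + \<epsilon> * c2 n = x * (Qp n + Qm n) + (if n = 0 then complex_of_real lam else 0)" for n
    proof (cases "n = 0")
      case True
      have "c1 n + \<epsilon> * c2 n = complex_of_real \<gamma>" using True a1 by (simp add: c1_def c2_def A0)
      moreover have "Qp n = 1" "Qm n = 1" using True FP(2) GP(2) FM(2) GM(2) k0
        by (simp_all add: Qp_def Qm_def)
      moreover have "x * (1 + 1) + complex_of_real lam = complex_of_real \<gamma>"
      proof -
        have "x * (1 + 1) = complex_of_real (\<gamma> - lam)" unfolding x_def one_add_one by simp
        then show ?thesis by simp
      qed
      ultimately show ?thesis using True by simp
    next
      case False
      then have n0: "n > 0" by simp
      have "Qp n + Qm n = (Xp n / complex_of_real (\<gamma> - lam)) * ((Yp n / complex_of_real (\<gamma> - lam)) * (complex_of_real (\<gamma> - lam) / A n))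
          + (Xm n / complex_of_real (\<gamma> - lam)) * ((Ym n / complex_of_real (\<gamma> - lam)) * (complex_of_real (\<gamma> - lam) / A n))"
        unfolding Qp_def Qm_def FP(4)[OF n0] GP(4)[OF n0] FM(4)[OF n0] GM(4)[OF n0] kn[OF n0] ..
      moreover have "c1 n + \<epsilon> * c2 n = x * ((Xp n / complex_of_real (\<gamma> - lam)) * ((Yp n / complex_of_real (\<gamma> - lam)) * (complex_of_real (\<gamma> - lam) / A n)))
          + x * ((Xm n / complex_of_real (\<gamma> - lam)) * ((Ym n / complex_of_real (\<gamma> - lam)) * (complex_of_real (\<gamma> - lam) / A n)))"
        unfolding x_def Xp_def Xm_def Yp_def Ym_def P1_def U1_def P2_def U2_def c1_def c2_def
        by (rule coef_alg[OF Anz]) (use gl in simp)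
      ultimately show ?thesis using False by (simp add: distrib_left)
    qed
    have gc2': "good (\<lambda>n. \<epsilon> * c2 n)" by (rule ps_cmult(2)[OF gc2 z])
    have "LS + \<epsilon> * LT = ps (\<lambda>n. c1 n + \<epsilon> * c2 n) z"
      using ps_add(1)[OF gc1 gc2' z] ps_cmult(1)[OF gc2 z] psc1[OF z] psc2[OF z] by (simp add: LS_def LT_def)
    also have "\<dots> = ps (\<lambda>n. x * (Qp n + Qm n) + (if n = 0 then complex_of_real lam else 0)) z"
      unfolding coef ..
    also have "\<dots> = x * ps (\<lambda>n. Qp n + Qm n) z + complex_of_real lam"
      by (rule ps_affine[OF ps_add(2)[OF gQp gQm z] z])
    also have "\<dots> = x * (ps Qp z + ps Qm z) + complex_of_real lam" using ps_add(1)[OF gQp gQm z] by simp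
    finally have eq: "LS + \<epsilon> * LT = x * (ps Qp z + ps Qm z) + complex_of_real lam" .
    have "Re (LS + \<epsilon> * LT) = Re LS - cmod LT" using \<epsilon>LT by simp
    moreover have "Re (x * (ps Qp z + ps Qm z) + complex_of_real lam) = (\<gamma> - lam) / 2 * (Re (ps Qp z) + Re (ps Qm z)) + lam"
      by (simp add: x_def)
    moreover have "(\<gamma> - lam) / 2 * (Re (ps Qp z) + Re (ps Qm z)) \<ge> (\<gamma> - lam) / 2 * (2 / 9)"
      using Qp_b Qm_b gl by (intro mult_left_mono) auto
    moreover have "(\<gamma> - lam) / 2 * (2 / 9) > 0" using gl by simp
    ultimately have "Re LS - cmod LT > lam" using eq by simp
    then show ?thesis by (simp add: LS_def LT_def)
  qed
  show ?thesis unfolding hc RH0_def using inH0 main by auto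
qed

end
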